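(* Let $T$ be a light tournament and $z\in V(T)$. Then $V_3(z)$ is 2-in-dominated by $V_2(z)$: there is a set $Z'\subseteq V_2(z)$ with $|Z'|\le 2$ such that every $s\in V_3(z)$ has an arc $(s,z')\in A(T)$ for some $z'\in Z'$.
   Context: A triangle of a tournament is a set of three vertices inducing a directed 3-cycle. An unordered pair $ab$ of vertices is a diagonal if there exist vertices $u,v$ with $\{u,v,a\}$ and $\{u,v,b\}$ both triangles. A triangle is heavy if at least two of its pairs are diagonals; a tournament is light if it has no heavy triangle. For $S\subseteq V(T)$, $N(S)=\{v\notin S: (v,u)\in A(T)\text{ for some }u\in S\}$. For $z\in V(T)$: $V_1(z)=\{z\}$ and $V_{j+1}(z)=N\big(\bigcup_{k\le j}V_k(z)\big)$ for $j\ge1$. *)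

theory Defs
  imports Main
begin

definition tournament :: "'a set \<Rightarrow> 'a rel \<Rightarrow> bool" where
  "tournament Vs A \<longleftrightarrow> finite Vs \<and> A \<subseteq> Vs \<times> Vs \<and>
     (\<forall>v. (v, v) \<notin> A) \<and>
     (\<forall>u\<in>Vs. \<forall>v\<in>Vs. u \<noteq> v \<longrightarrow> ((u, v) \<in> A \<longleftrightarrow> (v, u) \<notin> A))"

definition triangle :: "'a set \<Rightarrow> 'a rel \<Rightarrow> 'a set \<Rightarrow> bool" where
  "triangle Vs A X \<longleftrightarrow> (\<exists>a b c. X = {a, b, c} \<and> a \<in> Vs \<and> b \<in> Vs \<and> c \<in> Vs \<and>
     a \<noteq> b \<and> b \<noteq> c \<and> a \<noteq> c \<and> (a, b) \<in> A \<and> (b, c) \<in> A \<and> (c, a) \<in> A)"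

definition diagonal :: "'a set \<Rightarrow> 'a rel \<Rightarrow> 'a \<Rightarrow> 'a \<Rightarrow> bool" where
  "diagonal Vs A a b \<longleftrightarrow> a \<noteq> b \<and>
     (\<exists>u v. triangle Vs A {u, v, a} \<and> triangle Vs A {u, v, b})"

definition heavy :: "'a set \<Rightarrow> 'a rel \<Rightarrow> 'a set \<Rightarrow> bool" where
  "heavy Vs A X \<longleftrightarrow> triangle Vs A X \<and>
     (\<exists>a b c. X = {a, b, c} \<and> a \<noteq> b \<and> b \<noteq> c \<and> a \<noteq> c \<and>
        diagonal Vs A a b \<and> diagonal Vs A a c)"

definition light :: "'a set \<Rightarrow> 'a rel \<Rightarrow> bool" where
  "light Vs A \<longleftrightarrow> tournament Vs A \<and> \<not> (\<exists>X. heavy Vs A X)"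

definition Nb :: "'a set \<Rightarrow> 'a rel \<Rightarrow> 'a set \<Rightarrow> 'a set" where
  "Nb Vs A S = {v \<in> Vs. v \<notin> S \<and> (\<exists>u\<in>S. (v, u) \<in> A)}"

text \<open>upto_lev Vs A z j = V_1(z) \<union> ... \<union> V_(j+1)(z).\<close>
primrec upto_lev :: "'a set \<Rightarrow> 'a rel \<Rightarrow> 'a \<Rightarrow> nat \<Rightarrow> 'a set" where
  "upto_lev Vs A z 0 = {z}"
| "upto_lev Vs A z (Suc j) = upto_lev Vs A z j \<union> Nb Vs A (upto_lev Vs A z j)"

text \<open>Level sets V_j(z), indexed from 1 (level 0 is unused and empty).\<close>
fun level :: "'a set \<Rightarrow> 'a rel \<Rightarrow> 'a \<Rightarrow> nat \<Rightarrow> 'a set" where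
  "level Vs A z 0 = {}"
| "level Vs A z (Suc 0) = {z}"
| "level Vs A z (Suc (Suc j)) = Nb Vs A (upto_lev Vs A z j)"

end

theory Submission
  imports Defs
begin

lemma fin_argmax:
  fixes f :: "'a \<Rightarrow> nat"
  assumes "finite S" "S \<noteq> {}"
  shows "\<exists>x\<in>S. \<forall>y\<in>S. f y \<le> f x"
proof -
  have "Max (f ` S) \<in> f ` S" using assms by simp
  then obtain x where "x \<in> S" "f x = Max (f ` S)" by auto
  then show ?thesis using assms by (metis Max_ge finite_imageI imageI)
qed

lemma fin_argmin:
  fixes f :: "'a \<Rightarrow> nat"
  assumes "finite S" "S \<noteq> {}"
  shows "\<exists>x\<in>S. \<forall>y\<in>S. f x \<le> f y"
proof -
  have "Min (f ` S) \<in> f ` S" using assms by simp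
  then obtain x where "x \<in> S" "f x = Min (f ` S)" by auto
  then show ?thesis using assms by (metis Min_le finite_imageI imageI)
qed

lemma tri_intro:
  assumes "tournament Vs A" "a \<in> Vs" "b \<in> Vs" "c \<in> Vs"
    "(a, b) \<in> A" "(b, c) \<in> A" "(c, a) \<in> A"
  shows "triangle Vs A {a, b, c}"
proof -
  have irr: "\<And>v. (v, v) \<notin> A" using assms(1) unfolding tournament_def by blast
  have "a \<noteq> c" using assms(5,6) assms(1) irr unfolding tournament_def
    by (metis assms(2,7))
  then show ?thesis unfolding triangle_def using assms irr by blast
qed

theorem lemma5:
  assumes "light Vs A" and "z \<in> Vs"
  shows "\<exists>Z'. Z' \<subseteq> level Vs A z 2 \<and> card Z' \<le> 2 \<and>
           (\<forall>s\<in>level Vs A z 3. \<exists>z'\<in>Z'. (s, z') \<in> A)"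
proof -
  have T: "tournament Vs A" and noheavy: "\<And>X. \<not> heavy Vs A X"
    using assms(1) unfolding light_def by auto
  have fin: "finite Vs" and sub: "A \<subseteq> Vs \<times> Vs" and irr: "\<And>v. (v, v) \<notin> A"
    and asym: "\<And>u v. u \<in> Vs \<Longrightarrow> v \<in> Vs \<Longrightarrow> u \<noteq> v \<Longrightarrow> (u, v) \<in> A \<longleftrightarrow> (v, u) \<notin> A"
    using T unfolding tournament_def by (blast, blast, blast, blast)
  define V2 where "V2 = level Vs A z 2"
  define V3 where "V3 = level Vs A z 3"
  have V2eq: "V2 = {v \<in> Vs. v \<noteq> z \<and> (v, z) \<in> A}"
    unfolding V2_def by (auto simp: numeral_2_eq_2 Nb_def)
  have V3D: "s \<in> Vs \<and> s \<noteq> z \<and> (z, s) \<in> A \<and> s \<notin> V2 \<and> (\<exists>v\<in>V2. (s, v) \<in> A)" if "s \<in> V3" for s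
  proof -
    have l3: "level Vs A z 3 = Nb Vs A ({z} \<union> Nb Vs A {z})"
      by (simp add: numeral_3_eq_3)
    have "V2 = Nb Vs A {z}" unfolding V2_def by (simp add: numeral_2_eq_2)
    then have s: "s \<in> Vs" "s \<noteq> z" "s \<notin> V2" "\<exists>u\<in>{z} \<union> V2. (s, u) \<in> A"
      using that unfolding V3_def l3 Nb_def by auto
    have "(s, z) \<notin> A" using s V2eq by auto
    then have "(z, s) \<in> A" using asym[OF s(1) assms(2) s(2)] by auto
    then show ?thesis using s \<open>(s, z) \<notin> A\<close> by auto
  qed
  define D where "D s = {v \<in> V2. (s, v) \<in> A}" for s
  have finD: "finite (D s)" for s unfolding D_def V2eq using fin by auto
  define strong where "strong v \<longleftrightarrow> v \<in> V2 \<and> (\<forall>w\<in>V3. (w, v) \<notin> A \<longrightarrow> (\<forall>u\<in>V2. (w, u) \<in> A \<longrightarrow> (v, u) \<in> A))" for v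
  have str: "strong v" if s: "s \<in> V3" "v \<in> V2" "(s, v) \<in> A"
    and w: "w \<in> V3" "(s, w) \<in> A" "u \<in> V2" "(w, u) \<in> A" "(s, u) \<notin> A" for s v w u
  proof (rule ccontr)
    assume "\<not> strong v"
    then obtain w' u' where w': "w' \<in> V3" "(w', v) \<notin> A" "u' \<in> V2" "(w', u') \<in> A" "(v, u') \<notin> A"
      using s(2) unfolding strong_def by auto
    have zV: "z \<in> Vs" by (rule assms(2))
    have sD: "s \<in> Vs" "(z, s) \<in> A" "s \<noteq> z" using V3D[OF s(1)] by auto
    have wD: "w \<in> Vs" "(z, w) \<in> A" using V3D[OF w(1)] by auto
    have w'D: "w' \<in> Vs" "(z, w') \<in> A" "w' \<notin> V2" using V3D[OF w'(1)] by auto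
    have vD: "v \<in> Vs" "(v, z) \<in> A" "v \<noteq> z" using s(2) V2eq by auto
    have uD: "u \<in> Vs" "(u, z) \<in> A" using w(3) V2eq by auto
    have u'D: "u' \<in> Vs" "(u', z) \<in> A" using w'(3) V2eq by auto
    have "u' \<noteq> v" using w'(2,4) by auto
    then have "(u', v) \<in> A" using asym[OF u'D(1) vD(1)] w'(5) by auto
    have "w' \<noteq> v" using w'D(3) s(2) by auto
    then have "(v, w') \<in> A" using asym[OF vD(1) w'D(1)] w'(2) by auto
    have "u \<noteq> s" using w(3) V3D[OF s(1)] by auto
    then have "(u, s) \<in> A" using asym[OF uD(1) sD(1)] w(5) by auto
    have t1: "triangle Vs A {u', w', z}"
      using tri_intro[OF T zV w'D(1) u'D(1) w'D(2) w'(4) u'D(2)] by (simp add: insert_commute)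
    have t2: "triangle Vs A {u', w', v}"
      using tri_intro[OF T vD(1) w'D(1) u'D(1) \<open>(v, w') \<in> A\<close> w'(4) \<open>(u', v) \<in> A\<close>]
      by (simp add: insert_commute)
    have d1: "diagonal Vs A z v" unfolding diagonal_def using t1 t2 vD(3) by auto
    have t3: "triangle Vs A {u, w, z}"
      using tri_intro[OF T zV wD(1) uD(1) wD(2) w(4) uD(2)] by (simp add: insert_commute)
    have t4: "triangle Vs A {u, w, s}"
      using tri_intro[OF T sD(1) wD(1) uD(1) w(2) w(4) \<open>(u, s) \<in> A\<close>]
      by (simp add: insert_commute)
    have d2: "diagonal Vs A z s" unfolding diagonal_def using t3 t4 sD(3) by auto
    have t5: "triangle Vs A {z, s, v}" using tri_intro[OF T zV sD(1) vD(1) sD(2) s(3) vD(2)] .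
    have "s \<noteq> v" using s(3) irr by auto
    then have "heavy Vs A {z, s, v}" unfolding heavy_def using t5 d1 d2 sD(3) vD(3) by blast
    then show False using noheavy by blast
  qed
  have P1: "\<exists>Z1. Z1 \<subseteq> V2 \<and> card Z1 \<le> 1 \<and> (\<forall>s\<in>V3. (\<exists>v. strong v \<and> (s, v) \<in> A) \<longrightarrow> (\<exists>z'\<in>Z1. (s, z') \<in> A))"
  proof (cases "{v. strong v} = {}")
    case True
    then show ?thesis by (intro exI[of _ "{}"]) auto
  next
    case False
    define cov where "cov v = {w \<in> V3. (w, v) \<in> A}" for v
    have "finite {v. strong v}" using fin unfolding strong_def V2eq
      by (rule rev_finite_subset) auto
    then obtain vs where vs: "strong vs" "\<forall>y\<in>{v. strong v}. card (cov y) \<le> card (cov vs)"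
      using fin_argmax[of "{v. strong v}" "\<lambda>v. card (cov v)"] False by auto
    have fincov: "finite (cov v)" for v unfolding cov_def
      by (rule rev_finite_subset[OF fin]) (auto dest: V3D)
    have "(s, vs) \<in> A" if "s \<in> V3" "strong v" "(s, v) \<in> A" for s v
    proof (rule ccontr)
      assume nA: "(s, vs) \<notin> A"
      have "s \<in> cov v" using that unfolding cov_def by auto
      moreover have "s \<notin> cov vs" using nA unfolding cov_def by auto
      ultimately have "\<not> cov v \<subseteq> cov vs" by auto
      moreover have "card (cov v) \<le> card (cov vs)" using vs that(2) by auto
      ultimately have "\<not> cov vs \<subseteq> cov v"
        using card_subset_eq[OF fincov] by (metis antisym card_mono fincov)
      then obtain w where w: "w \<in> V3" "(w, vs) \<in> A" "(w, v) \<notin> A" unfolding cov_def by auto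
      have vV: "v \<in> V2" "vs \<in> V2" using that(2) vs(1) unfolding strong_def by auto
      have "(v, vs) \<in> A" using that(2) w vV unfolding strong_def by blast
      moreover have "(vs, v) \<in> A" using vs(1) that nA vV unfolding strong_def by blast
      ultimately show False using asym vV V2eq irr by blast
    qed
    then show ?thesis using vs(1) unfolding strong_def
      by (intro exI[of _ "{vs}"]) auto
  qed
  define R where "R = {s \<in> V3. \<not> (\<exists>v. strong v \<and> (s, v) \<in> A)}"
  have Rkey: "D w \<subseteq> D s" if "s \<in> R" "w \<in> V3" "(s, w) \<in> A" for s w
  proof (rule ccontr)
    assume "\<not> D w \<subseteq> D s"
    then obtain u where u: "u \<in> V2" "(w, u) \<in> A" "(s, u) \<notin> A" unfolding D_def by auto
    have sV: "s \<in> V3" using that R_def by auto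
    obtain v where v: "v \<in> V2" "(s, v) \<in> A" using V3D[OF sV] by auto
    have "strong v" using str[OF sV v that(2,3) u(1,2,3)] .
    then show False using that(1) v unfolding R_def by auto
  qed
  have P2: "\<exists>Z2. Z2 \<subseteq> V2 \<and> card Z2 \<le> 1 \<and> (\<forall>s\<in>R. \<exists>z'\<in>Z2. (s, z') \<in> A)"
  proof (cases "R = {}")
    case True
    then show ?thesis by (intro exI[of _ "{}"]) auto
  next
    case False
    have "finite R" unfolding R_def by (rule rev_finite_subset[OF fin]) (auto dest: V3D)
    then obtain s0 where s0: "s0 \<in> R" "\<forall>y\<in>R. card (D s0) \<le> card (D y)"
      using fin_argmin[of R "\<lambda>s. card (D s)"] False by auto
    have s0V: "s0 \<in> V3" using s0 R_def by auto
    obtain u0 where u0: "u0 \<in> V2" "(s0, u0) \<in> A" using V3D[OF s0V] by auto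
    have "(s, u0) \<in> A" if "s \<in> R" for s
    proof (cases "s = s0")
      case True then show ?thesis using u0 by simp
    next
      case False
      have sV: "s \<in> V3" using that R_def by auto
      have Vs: "s \<in> Vs" "s0 \<in> Vs" using V3D sV s0V by auto
      show ?thesis
      proof (cases "(s, s0) \<in> A")
        case True
        then have "D s0 \<subseteq> D s" using Rkey[OF that s0V] by auto
        then show ?thesis using u0 unfolding D_def by auto
      next
        case nA: False
        then have "(s0, s) \<in> A" using asym[OF Vs False] by auto
        then have "D s \<subseteq> D s0" using Rkey[OF s0(1) sV] by auto
        moreover have "card (D s0) \<le> card (D s)" using s0 that by auto
        ultimately have "D s = D s0" using card_subset_eq[OF finD] by (metis antisym card_mono finD)
        then show ?thesis using u0 unfolding D_def by auto
      qed
    qed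
    then show ?thesis using u0 by (intro exI[of _ "{u0}"]) auto
  qed
  obtain Z1 where Z1: "Z1 \<subseteq> V2" "card Z1 \<le> 1" "\<forall>s\<in>V3. (\<exists>v. strong v \<and> (s, v) \<in> A) \<longrightarrow> (\<exists>z'\<in>Z1. (s, z') \<in> A)"
    using P1 by blast
  obtain Z2 where Z2: "Z2 \<subseteq> V2" "card Z2 \<le> 1" "\<forall>s\<in>R. \<exists>z'\<in>Z2. (s, z') \<in> A"
    using P2 by blast
  have "card (Z1 \<union> Z2) \<le> 2" using card_Un_le[of Z1 Z2] Z1(2) Z2(2) by linarith
  moreover have "\<forall>s\<in>V3. \<exists>z'\<in>Z1 \<union> Z2. (s, z') \<in> A"
    using Z1(3) Z2(3) unfolding R_def by blast
  ultimately have "Z1 \<union> Z2 \<subseteq> V2 \<and> card (Z1 \<union> Z2) \<le> 2 \<and> (\<forall>s\<in>V3. \<exists>z'\<in>Z1 \<union> Z2. (s, z') \<in> A)"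
    using Z1(1) Z2(1) by simp
  then show ?thesis unfolding V2_def V3_def by (intro exI[of _ "Z1 \<union> Z2"])
qed

end
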